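(* Let $V$ be a finite nonempty set, $U\subseteq V$, $\hat x$ a maximally specific partial function on $P_V$, $\hat x'=\hat x|_{P_U}$, and $y\in X_U[\hat x']$. Then, with $\tau^y_{\mathrm{out}},\tau^y_{\mathrm{in}},\tau^y_{\mathrm{bd}}$ as defined in the context: (1) For $\tau=\tau^y_{\mathrm{out}}$, let $P'_{01}=\{pq\in(V\setminus U)\times U\mid\exists r\in U:\hat x_{pr}\neq0\wedge y_{rq}=1\}\setminus\hat x^{-1}(1)$, $P'_{10}=P''_{10}=(U\times(V\setminus U))\setminus\hat x^{-1}(0)$ and $P''_{01}=((V\setminus U)\times U)\setminus\hat x^{-1}(1)$. Then $P_{01}[\tau]\cap\delta(U)\subseteq P'_{01}\subseteq P''_{01}$ and $P_{10}[\tau]\cap\delta(U)\subseteq P'_{10}=P''_{10}$. (2) For $\tau=\tau^y_{\mathrm{in}}$, let $P'_{01}=\{pq\in U\times(V\setminus U)\mid\exists r\in U: y_{pr}=1\wedge\hat x_{rq}\neq0\}\setminus\hat x^{-1}(1)$, $P'_{10}=P''_{10}=((V\setminus U)\times U)\setminus\hat x^{-1}(0)$ and $P''_{01}=(U\times(V\setminus U))\setminus\hat x^{-1}(1)$. Then $P_{01}[\tau]\cap\delta(U)\subseteq P'_{01}\subseteq P''_{01}$ and $P_{10}[\tau]\cap\delta(U)\subseteq P'_{10}=P''_{10}$. (3) For $\tau=\tau^y_{\mathrm{bd}}$, let $P'_{01}=P''_{01}=\emptyset$ and $P'_{10}=P''_{10}=\delta(U)\setminus\hat x^{-1}(0)$.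 Then $P_{01}[\tau]\cap\delta(U)\subseteq P'_{01}=P''_{01}$ and $P_{10}[\tau]\cap\delta(U)\subseteq P'_{10}=P''_{10}$.
   Context: For a finite set $W$, $P_W=\{pq\in W^2\mid p\neq q\}$ and $X_W$ is the set of $x\in\{0,1\}^{P_W}$ with $x_{pq}+x_{qr}-x_{pr}\le1$ for all pairwise distinct $p,q,r\in W$. A partial function $\tilde x$ on $P_W$ is a map from $\operatorname{dom}(\tilde x)\subseteq P_W$ to $\{0,1\}$, $\tilde x^{-1}(b)$ the pairs mapped to $b$, $X_W[\tilde x]=\{x\in X_W\mid x_{pq}=\tilde x_{pq}\ \forall pq\in\operatorname{dom}(\tilde x)\}$; convention $\tilde x_{aa}=1$, $x_{aa}=1$, $y_{aa}=1$ for all $a$. A pair is decided if it has the same value in all completions; $\tilde x$ is maximally specific if $X_W[\tilde x]\ne\emptyset$ and the decided pairs are exactly $\operatorname{dom}(\tilde x)$. $\hat x|_{P_U}$ has domain $\operatorname{dom}(\hat x)\cap P_U$. $\delta(U)=(U\times(V\setminus U))\cup((V\setminus U)\times U)$. For $x\in X_V[\hat x]$ define vectors in $\{0,1\}^{P_V}$: $\tau^y_{\mathrm{out}}(x)_{pq}$ equals $y_{pq}$ if $pq\in P_U$; $0$ if $pq\in U\times(V\setminus U)$; for $pq\in(V\setminus U)\times U$, $1$ if $\exists r\in U: x_{pr}=1\wedge y_{rq}=1$ and $0$ otherwise; $x_{pq}$ if $pq\in P_{V\setminus U}$. $\tau^y_{\mathrm{in}}(x)_{pq}$ equals $y_{pq}$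 if $pq\in P_U$; $0$ if $pq\in(V\setminus U)\times U$; for $pq\in U\times(V\setminus U)$, $1$ if $\exists r\in U: y_{pr}=1\wedge x_{rq}=1$ and $0$ otherwise; $x_{pq}$ if $pq\in P_{V\setminus U}$. $\tau^y_{\mathrm{bd}}(x)_{pq}$ equals $y_{pq}$ if $pq\in P_U$; $0$ if $pq\in\delta(U)$; $x_{pq}$ if $pq\in P_{V\setminus U}$. For a map $\tau$ on $X_V[\hat x]$ and $a,b\in\{0,1\}$, $P_{ab}[\tau]=\{e\in P_V\mid\exists x\in X_V[\hat x]: x_e=a\wedge\tau(x)_e=b\}$. *)

theory Defs
  imports Main
begin

definition P :: "'a set \<Rightarrow> ('a \<times> 'a) set" where
  "P W = {(p, q). p \<in> W \<and> q \<in> W \<and> p \<noteq> q}"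

(* 0/1 vectors indexed by P_W are total functions, 0 outside P_W (extensional) *)
definition X :: "'a set \<Rightarrow> ('a \<times> 'a \<Rightarrow> nat) set" where
  "X W = {x. (\<forall>e. e \<notin> P W \<longrightarrow> x e = 0) \<and> (\<forall>e\<in>P W. x e \<in> {0, 1}) \<and>
            (\<forall>p\<in>W. \<forall>q\<in>W. \<forall>r\<in>W. p \<noteq> q \<and> q \<noteq> r \<and> p \<noteq> r \<longrightarrow>
                x (p, q) + x (q, r) \<le> 1 + x (p, r))}"

definition partial_fun :: "'a set \<Rightarrow> ('a \<times> 'a \<Rightarrow> nat option) \<Rightarrow> bool" where
  "partial_fun W xh \<longleftrightarrow> dom xh \<subseteq> P W \<and> ran xh \<subseteq> {0, 1}"

definition Xc :: "'a set \<Rightarrow> ('a \<times> 'a \<Rightarrow> nat option) \<Rightarrow> ('a \<times> 'a \<Rightarrow> nat) set" where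
  "Xc W xh = {x \<in> X W. \<forall>e\<in>dom xh. xh e = Some (x e)}"

definition decided :: "'a set \<Rightarrow> ('a \<times> 'a \<Rightarrow> nat option) \<Rightarrow> 'a \<times> 'a \<Rightarrow> bool" where
  "decided W xh e \<longleftrightarrow> (\<exists>b. \<forall>x\<in>Xc W xh. x e = b)"

definition max_specific :: "'a set \<Rightarrow> ('a \<times> 'a \<Rightarrow> nat option) \<Rightarrow> bool" where
  "max_specific W xh \<longleftrightarrow> partial_fun W xh \<and> Xc W xh \<noteq> {} \<and>
     {e \<in> P W. decided W xh e} = dom xh"

definition val :: "('a \<times> 'a \<Rightarrow> nat) \<Rightarrow> 'a \<Rightarrow> 'a \<Rightarrow> nat" where
  "val x p q = (if p = q then 1 else x (p, q))"

definition pval :: "('a \<times> 'a \<Rightarrow> nat option) \<Rightarrow> 'a \<Rightarrow> 'a \<Rightarrow> nat option" where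
  "pval xh p q = (if p = q then Some 1 else xh (p, q))"

definition preim :: "('a \<times> 'a \<Rightarrow> nat option) \<Rightarrow> nat \<Rightarrow> ('a \<times> 'a) set" where
  "preim xh b = {e. xh e = Some b}"

definition delta :: "'a set \<Rightarrow> 'a set \<Rightarrow> ('a \<times> 'a) set" where
  "delta V U = (U \<times> (V - U)) \<union> ((V - U) \<times> U)"

definition tau_out :: "'a set \<Rightarrow> 'a set \<Rightarrow> ('a \<times> 'a \<Rightarrow> nat) \<Rightarrow> ('a \<times> 'a \<Rightarrow> nat) \<Rightarrow> 'a \<times> 'a \<Rightarrow> nat" where
  "tau_out V U y x e = (case e of (p, q) \<Rightarrow>
     if (p, q) \<in> P U then y (p, q)
     else if (p, q) \<in> U \<times> (V - U) then 0
     else if (p, q) \<in> (V - U) \<times> U then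
       (if \<exists>r\<in>U. val x p r = 1 \<and> val y r q = 1 then 1 else 0)
     else if (p, q) \<in> P (V - U) then x (p, q)
     else 0)"

definition tau_in :: "'a set \<Rightarrow> 'a set \<Rightarrow> ('a \<times> 'a \<Rightarrow> nat) \<Rightarrow> ('a \<times> 'a \<Rightarrow> nat) \<Rightarrow> 'a \<times> 'a \<Rightarrow> nat" where
  "tau_in V U y x e = (case e of (p, q) \<Rightarrow>
     if (p, q) \<in> P U then y (p, q)
     else if (p, q) \<in> (V - U) \<times> U then 0
     else if (p, q) \<in> U \<times> (V - U) then
       (if \<exists>r\<in>U. val y p r = 1 \<and> val x r q = 1 then 1 else 0)
     else if (p, q) \<in> P (V - U) then x (p, q)
     else 0)"

definition tau_bd :: "'a set \<Rightarrow> 'a set \<Rightarrow> ('a \<times> 'a \<Rightarrow> nat) \<Rightarrow> ('a \<times> 'a \<Rightarrow> nat) \<Rightarrow> 'a \<times> 'a \<Rightarrow> nat" where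
  "tau_bd V U y x e = (case e of (p, q) \<Rightarrow>
     if (p, q) \<in> P U then y (p, q)
     else if (p, q) \<in> delta V U then 0
     else if (p, q) \<in> P (V - U) then x (p, q)
     else 0)"

definition Pab :: "'a set \<Rightarrow> ('a \<times> 'a \<Rightarrow> nat option) \<Rightarrow>
    (('a \<times> 'a \<Rightarrow> nat) \<Rightarrow> 'a \<times> 'a \<Rightarrow> nat) \<Rightarrow> nat \<Rightarrow> nat \<Rightarrow> ('a \<times> 'a) set" where
  "Pab V xh tau a b = {e \<in> P V. \<exists>x\<in>Xc V xh. x e = a \<and> tau x e = b}"

end

theory Submission
  imports Defs
begin

lemma xc_val: "x \<in> Xc V xh \<Longrightarrow> xh e = Some b \<Longrightarrow> x e = b"
proof -
  assume x: "x \<in> Xc V xh" and h: "xh e = Some b"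
  from x have "\<forall>e\<in>dom xh. xh e = Some (x e)" unfolding Xc_def by blast
  moreover from h have "e \<in> dom xh" by blast
  ultimately have "xh e = Some (x e)" by blast
  with h show "x e = b" by simp
qed

lemma tout1: assumes "p \<in> U" "q \<in> V - U" shows "tau_out V U y x (p,q) = 0"
proof -
  have h1: "(p,q) \<notin> P U" using assms by (simp add: P_def)
  have h2: "(p,q) \<in> U \<times> (V - U)" using assms by blast
  show ?thesis unfolding tau_out_def prod.case if_not_P[OF h1] if_P[OF h2] ..
qed
lemma tout2: assumes "p \<in> V - U" "q \<in> U" shows "tau_out V U y x (p,q) = (if \<exists>r\<in>U. val x p r = 1 \<and> val y r q = 1 then 1 else 0)"
proof -
  have h1: "(p,q) \<notin> P U" using assms by (simp add: P_def)
  have h2: "(p,q) \<notin> U \<times> (V - U)" using assms by blast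
  have h3: "(p,q) \<in> (V - U) \<times> U" using assms by blast
  show ?thesis unfolding tau_out_def prod.case if_not_P[OF h1] if_not_P[OF h2] if_P[OF h3] ..
qed
lemma tin1: assumes "p \<in> V - U" "q \<in> U" shows "tau_in V U y x (p,q) = 0"
proof -
  have h1: "(p,q) \<notin> P U" using assms by (simp add: P_def)
  have h2: "(p,q) \<in> (V - U) \<times> U" using assms by blast
  show ?thesis unfolding tau_in_def prod.case if_not_P[OF h1] if_P[OF h2] ..
qed
lemma tin2: assumes "p \<in> U" "q \<in> V - U" shows "tau_in V U y x (p,q) = (if \<exists>r\<in>U. val y p r = 1 \<and> val x r q = 1 then 1 else 0)"
proof -
  have h1: "(p,q) \<notin> P U" using assms by (simp add: P_def)
  have h2: "(p,q) \<notin> (V - U) \<times> U" using assms by blast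
  have h3: "(p,q) \<in> U \<times> (V - U)" using assms by blast
  show ?thesis unfolding tau_in_def prod.case if_not_P[OF h1] if_not_P[OF h2] if_P[OF h3] ..
qed
lemma tbd: assumes "e \<in> delta V U" shows "tau_bd V U y x e = 0"
proof (cases e)
  case (Pair p q)
  have h1: "(p,q) \<notin> P U" using assms Pair by (auto simp: P_def delta_def)
  have h2: "(p,q) \<in> delta V U" using assms Pair by simp
  show ?thesis unfolding Pair tau_bd_def prod.case if_not_P[OF h1] if_P[OF h2] ..
qed
lemma deltaE: "(p,q) \<in> delta V U \<Longrightarrow> (p \<in> U \<and> q \<in> V - U) \<or> (p \<in> V - U \<and> q \<in> U)"
  by (auto simp: delta_def)

lemma PabE: assumes "e \<in> Pab V xh tau a b \<inter> delta V U"
  obtains p q x where "e = (p,q)" "x \<in> Xc V xh" "x (p,q) = a" "tau x (p,q) = b" "(p,q) \<in> delta V U"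
proof -
  from assms have "\<exists>x\<in>Xc V xh. x e = a \<and> tau x e = b" "e \<in> delta V U" unfolding Pab_def by blast+
  then obtain x where "x \<in> Xc V xh" "x e = a" "tau x e = b" by blast
  moreover obtain p q where "e = (p,q)" by (cases e)
  ultimately show ?thesis using that \<open>e \<in> delta V U\<close> by blast
qed

lemma pval_ne0: assumes x: "x \<in> Xc V xh" and v: "val x p r = 1" and ne: "p \<noteq> r"
  shows "pval xh p r \<noteq> Some 0"
proof
  assume "pval xh p r = Some 0"
  hence "xh (p,r) = Some 0" using ne by (simp add: pval_def)
  hence "x (p,r) = 0" by (rule xc_val[OF x])
  moreover have "x (p,r) = 1" using v ne by (simp add: val_def)
  ultimately show False by simp
qed

lemma xh_ne: assumes x: "x \<in> Xc V xh" and v: "x e = a" and ne: "a \<noteq> b"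
  shows "e \<notin> preim xh b"
proof
  assume "e \<in> preim xh b"
  hence "xh e = Some b" by (simp add: preim_def)
  hence "x e = b" by (rule xc_val[OF x])
  with v ne show False by simp
qed

theorem lemma7p3:
  fixes V U :: "'a set" and xh :: "'a \<times> 'a \<Rightarrow> nat option" and y :: "'a \<times> 'a \<Rightarrow> nat"
  assumes "finite V" and "V \<noteq> {}" and "U \<subseteq> V"
    and "max_specific V xh"
    and "y \<in> Xc U (xh |` P U)"
  shows
    "(Pab V xh (tau_out V U y) 0 1 \<inter> delta V U
        \<subseteq> {(p, q) \<in> (V - U) \<times> U. \<exists>r\<in>U. pval xh p r \<noteq> Some 0 \<and> val y r q = 1} - preim xh 1
     \<and> {(p, q) \<in> (V - U) \<times> U. \<exists>r\<in>U. pval xh p r \<noteq> Some 0 \<and> val y r q = 1} - preim xh 1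
        \<subseteq> ((V - U) \<times> U) - preim xh 1
     \<and> Pab V xh (tau_out V U y) 1 0 \<inter> delta V U \<subseteq> (U \<times> (V - U)) - preim xh 0)
   \<and>
    (Pab V xh (tau_in V U y) 0 1 \<inter> delta V U
        \<subseteq> {(p, q) \<in> U \<times> (V - U). \<exists>r\<in>U. val y p r = 1 \<and> pval xh r q \<noteq> Some 0} - preim xh 1
     \<and> {(p, q) \<in> U \<times> (V - U). \<exists>r\<in>U. val y p r = 1 \<and> pval xh r q \<noteq> Some 0} - preim xh 1
        \<subseteq> (U \<times> (V - U)) - preim xh 1
     \<and> Pab V xh (tau_in V U y) 1 0 \<inter> delta V U \<subseteq> ((V - U) \<times> U) - preim xh 0)
   \<and>
    (Pab V xh (tau_bd V U y) 0 1 \<inter> delta V U \<subseteq> {}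
     \<and> Pab V xh (tau_bd V U y) 1 0 \<inter> delta V U \<subseteq> delta V U - preim xh 0)"
proof -
  let ?S1 = "{(p, q) \<in> (V - U) \<times> U. \<exists>r\<in>U. pval xh p r \<noteq> Some 0 \<and> val y r q = 1}"
  let ?S2 = "{(p, q) \<in> U \<times> (V - U). \<exists>r\<in>U. val y p r = 1 \<and> pval xh r q \<noteq> Some 0}"
  have A1: "Pab V xh (tau_out V U y) 0 1 \<inter> delta V U \<subseteq> ?S1 - preim xh 1"
  proof
    fix e assume "e \<in> Pab V xh (tau_out V U y) 0 1 \<inter> delta V U"
    then obtain p q x where e: "e = (p,q)" and x: "x \<in> Xc V xh" and x0: "x (p,q) = 0"
      and t: "tau_out V U y x (p,q) = 1" and d: "(p,q) \<in> delta V U"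
      by (rule PabE)
    have pq: "p \<in> V - U" "q \<in> U"
    proof -
      have "\<not> (p \<in> U \<and> q \<in> V - U)"
      proof
        assume "p \<in> U \<and> q \<in> V - U"
        hence "tau_out V U y x (p,q) = 0" by (intro tout1) blast+
        with t show False by simp
      qed
      with deltaE[OF d] show "p \<in> V - U" "q \<in> U" by blast+
    qed
    have "\<exists>r\<in>U. val x p r = 1 \<and> val y r q = 1"
    proof (rule ccontr)
      assume a: "\<not> (\<exists>r\<in>U. val x p r = 1 \<and> val y r q = 1)"
      have "tau_out V U y x (p,q) = (if \<exists>r\<in>U. val x p r = 1 \<and> val y r q = 1 then 1 else 0)"
        by (rule tout2[OF pq])
      also have "\<dots> = 0" using a by (simp only: if_False)
      finally show False using t by simp
    qed
    then obtain r where r: "r \<in> U" "val x p r = 1" "val y r q = 1" by blast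
    have "p \<noteq> r" using pq r by blast
    hence "pval xh p r \<noteq> Some 0" by (rule pval_ne0[OF x r(2)])
    hence "\<exists>r\<in>U. pval xh p r \<noteq> Some 0 \<and> val y r q = 1" using r by blast
    hence "(p,q) \<in> ?S1" using pq by simp
    moreover have "(p,q) \<notin> preim xh 1" using xh_ne[OF x x0] by simp
    ultimately show "e \<in> ?S1 - preim xh 1" unfolding e by (rule DiffI)
  qed
  have A2: "?S1 - preim xh 1 \<subseteq> ((V - U) \<times> U) - preim xh 1"
    by (rule Diff_mono[OF _ subset_refl]) auto
  have A3: "Pab V xh (tau_out V U y) 1 0 \<inter> delta V U \<subseteq> (U \<times> (V - U)) - preim xh 0"
  proof
    fix e assume "e \<in> Pab V xh (tau_out V U y) 1 0 \<inter> delta V U"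
    then obtain p q x where e: "e = (p,q)" and x: "x \<in> Xc V xh" and x1: "x (p,q) = 1"
      and t: "tau_out V U y x (p,q) = 0" and d: "(p,q) \<in> delta V U"
      by (rule PabE)
    have "\<not> (p \<in> V - U \<and> q \<in> U)"
    proof
      assume pq: "p \<in> V - U \<and> q \<in> U"
      hence ex: "\<exists>r\<in>U. val x p r = 1 \<and> val y r q = 1" using x1 by (auto simp: val_def)
      have "tau_out V U y x (p,q) = (if \<exists>r\<in>U. val x p r = 1 \<and> val y r q = 1 then 1 else 0)"
        using pq by (intro tout2) blast+
      also have "\<dots> = 1" using ex by (simp only: if_True)
      finally show False using t by simp
    qed
    hence "(p,q) \<in> U \<times> (V - U)" using deltaE[OF d] by blast
    moreover have "(p,q) \<notin> preim xh 0" using xh_ne[OF x x1] by simp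
    ultimately show "e \<in> (U \<times> (V - U)) - preim xh 0" unfolding e by (rule DiffI)
  qed
  have B1: "Pab V xh (tau_in V U y) 0 1 \<inter> delta V U \<subseteq> ?S2 - preim xh 1"
  proof
    fix e assume "e \<in> Pab V xh (tau_in V U y) 0 1 \<inter> delta V U"
    then obtain p q x where e: "e = (p,q)" and x: "x \<in> Xc V xh" and x0: "x (p,q) = 0"
      and t: "tau_in V U y x (p,q) = 1" and d: "(p,q) \<in> delta V U"
      by (rule PabE)
    have pq: "p \<in> U" "q \<in> V - U"
    proof -
      have "\<not> (p \<in> V - U \<and> q \<in> U)"
      proof
        assume "p \<in> V - U \<and> q \<in> U"
        hence "tau_in V U y x (p,q) = 0" by (intro tin1) blast+
        with t show False by simp
      qed
      with deltaE[OF d] show "p \<in> U" "q \<in> V - U" by blast+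
    qed
    have "\<exists>r\<in>U. val y p r = 1 \<and> val x r q = 1"
    proof (rule ccontr)
      assume a: "\<not> (\<exists>r\<in>U. val y p r = 1 \<and> val x r q = 1)"
      have "tau_in V U y x (p,q) = (if \<exists>r\<in>U. val y p r = 1 \<and> val x r q = 1 then 1 else 0)"
        by (rule tin2[OF pq])
      also have "\<dots> = 0" using a by (simp only: if_False)
      finally show False using t by simp
    qed
    then obtain r where r: "r \<in> U" "val y p r = 1" "val x r q = 1" by blast
    have "r \<noteq> q" using pq r by blast
    hence "pval xh r q \<noteq> Some 0" by (rule pval_ne0[OF x r(3)])
    hence "\<exists>r\<in>U. val y p r = 1 \<and> pval xh r q \<noteq> Some 0" using r by blast
    hence "(p,q) \<in> ?S2" using pq by simp
    moreover have "(p,q) \<notin> preim xh 1" using xh_ne[OF x x0] by simp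
    ultimately show "e \<in> ?S2 - preim xh 1" unfolding e by (rule DiffI)
  qed
  have B2: "?S2 - preim xh 1 \<subseteq> (U \<times> (V - U)) - preim xh 1"
    by (rule Diff_mono[OF _ subset_refl]) auto
  have B3: "Pab V xh (tau_in V U y) 1 0 \<inter> delta V U \<subseteq> ((V - U) \<times> U) - preim xh 0"
  proof
    fix e assume "e \<in> Pab V xh (tau_in V U y) 1 0 \<inter> delta V U"
    then obtain p q x where e: "e = (p,q)" and x: "x \<in> Xc V xh" and x1: "x (p,q) = 1"
      and t: "tau_in V U y x (p,q) = 0" and d: "(p,q) \<in> delta V U"
      by (rule PabE)
    have "\<not> (p \<in> U \<and> q \<in> V - U)"
    proof
      assume pq: "p \<in> U \<and> q \<in> V - U"
      hence ex: "\<exists>r\<in>U. val y p r = 1 \<and> val x r q = 1" using x1 by (auto simp: val_def)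
      have "tau_in V U y x (p,q) = (if \<exists>r\<in>U. val y p r = 1 \<and> val x r q = 1 then 1 else 0)"
        using pq by (intro tin2) blast+
      also have "\<dots> = 1" using ex by (simp only: if_True)
      finally show False using t by simp
    qed
    hence "(p,q) \<in> (V - U) \<times> U" using deltaE[OF d] by blast
    moreover have "(p,q) \<notin> preim xh 0" using xh_ne[OF x x1] by simp
    ultimately show "e \<in> ((V - U) \<times> U) - preim xh 0" unfolding e by (rule DiffI)
  qed
  have C1: "Pab V xh (tau_bd V U y) 0 1 \<inter> delta V U \<subseteq> {}"
  proof
    fix e assume "e \<in> Pab V xh (tau_bd V U y) 0 1 \<inter> delta V U"
    then obtain p q x where "tau_bd V U y x (p,q) = 1" and d: "(p,q) \<in> delta V U"
      by (rule PabE)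
    with tbd[OF d] show "e \<in> {}" by simp
  qed
  have C3: "Pab V xh (tau_bd V U y) 1 0 \<inter> delta V U \<subseteq> delta V U - preim xh 0"
  proof
    fix e assume "e \<in> Pab V xh (tau_bd V U y) 1 0 \<inter> delta V U"
    then obtain p q x where e: "e = (p,q)" and x: "x \<in> Xc V xh" and x1: "x (p,q) = 1"
      and d: "(p,q) \<in> delta V U"
      by (rule PabE)
    have "(p,q) \<notin> preim xh 0" using xh_ne[OF x x1] by simp
    thus "e \<in> delta V U - preim xh 0" using e d by blast
  qed
  show ?thesis by (intro conjI A1 A2 A3 B1 B2 B3 C1 C3)
qed

end
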